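(* Let $\theta=(\{X_s\}_{s\in S},\{\theta_s\}_{s\in S})$ and $\gamma=(\{Y_t\}_{t\in T},\{\gamma_t\}_{t\in T})$ be almost ample topological partial actions of inverse semigroups $S$ and $T$ on spaces $X$ and $Y$, and suppose the groupoids of germs $S\ltimes X$ and $T\ltimes Y$ are isomorphic as topological groupoids. Then $\theta$ and $\gamma$ are continuously orbit equivalent.
   Context: A topological partial action $\theta$ of an inverse semigroup $S$ on $X$ consists of open $X_s\subseteq X$ and homeomorphisms $\theta_s:X_{s^*}\to X_s$ with $s\mapsto\theta_s$ a partial homomorphism into the inverse semigroup of partial bijections of $X$ (i.e. $\theta_{s^*}=\theta_s^{-1}$, $\theta_s\theta_t\le\theta_{st}$, $s\le t\Rightarrow\theta_s\le\theta_t$, where $s\le t$ iff $s=ts^*s$) and $X=\bigcup_{e\in E(S)}X_e$, $E(S)$ the idempotents. A Hausdorff space is ultraparacompact if every open cover has a refinement consisting of pairwise disjoint clopen sets. $\theta$ is almost ample if $X$ is locally compact Hausdorff and every $X_s$ ($s\in S$) is ultraparacompact. Groupoid of germs $S\ltimes X$: germs $[s,x]$ of pairs $(s,x)$ with $x\in X_{s^*}$, where $(s,x)\sim(t,y)$ iff $x=y$ and some $u\le s,t$ has $x\in X_{u^*}$; source $x$, range $\theta_s(x)$, product $[s,x][t,y]=[st,y]$ when $x=\theta_t(y)$, inverse $[s^*,\theta_s(x)]$, unit space identified with $X$; topology with basis $[s,U]=\{[s,x]:x\in U\}$, $U\subseteq X_{s^*}$ open. Continuous orbit equivalence: writing $S_x=\{s:x\in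 X_{s^*}\}$ and $S*X=\{(s,x):x\in X_{s^*}\}$ (with $S,T$ discrete), there exist a homeomorphism $\varphi:X\to Y$ and continuous $a:S*X\to T$, $b:T*Y\to S$ with $a(s,x)\in T_{\varphi(x)}$, $b(t,y)\in S_{\varphi^{-1}(y)}$, $\varphi(\theta_s(x))=\gamma_{a(s,x)}(\varphi(x))$ and $\varphi^{-1}(\gamma_t(y))=\theta_{b(t,y)}(\varphi^{-1}(y))$ for all $x$, $s\in S_x$, $y$, $t\in T_y$. *)

theory Defs
  imports "HOL-Analysis.Analysis"
begin

definition inverse_semigroup :: "'s::semigroup_mult itself \<Rightarrow> bool" where
  "inverse_semigroup _ \<longleftrightarrow> (\<forall>s::'s. \<exists>!t. s * t * s = s \<and> t * s * t = t)"

definition star :: "'s::semigroup_mult \<Rightarrow> 's" where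
  "star s = (THE t. s * t * s = s \<and> t * s * t = t)"

definition isg_le :: "'s::semigroup_mult \<Rightarrow> 's \<Rightarrow> bool" where
  "isg_le s t \<longleftrightarrow> s = t * star s * s"

definition idempotents :: "'s::semigroup_mult set" where
  "idempotents = {e. e * e = e}"

text \<open>Dom s is X_s, th s is theta_s (only meaningful on Dom (star s)).\<close>
definition partial_action ::
  "'x topology \<Rightarrow> ('s::semigroup_mult \<Rightarrow> 'x set) \<Rightarrow> ('s \<Rightarrow> 'x \<Rightarrow> 'x) \<Rightarrow> bool" where
  "partial_action TX Dom th \<longleftrightarrow>
     (\<forall>s. openin TX (Dom s)) \<and>
     (\<forall>s. homeomorphic_maps (subtopology TX (Dom (star s))) (subtopology TX (Dom s))
                             (th s) (th (star s))) \<and>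
     (\<forall>s t x. x \<in> Dom (star t) \<and> th t x \<in> Dom (star s) \<longrightarrow>
              x \<in> Dom (star (s * t)) \<and> th (s * t) x = th s (th t x)) \<and>
     (\<forall>s t. isg_le s t \<longrightarrow>
              Dom (star s) \<subseteq> Dom (star t) \<and> (\<forall>x\<in>Dom (star s). th s x = th t x)) \<and>
     topspace TX = (\<Union>e\<in>idempotents. Dom e)"

definition ultraparacompact :: "'a topology \<Rightarrow> bool" where
  "ultraparacompact T \<longleftrightarrow> Hausdorff_space T \<and>
     (\<forall>\<U>. (\<forall>U\<in>\<U>. openin T U) \<and> topspace T \<subseteq> \<Union>\<U> \<longrightarrow>
        (\<exists>\<V>. (\<forall>V\<in>\<V>. openin T V \<and> closedin T V \<and> (\<exists>U\<in>\<U>. V \<subseteq> U)) \<and>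
              \<Union>\<V> = topspace T \<and> pairwise disjnt \<V>))"

definition almost_ample ::
  "'x topology \<Rightarrow> ('s::semigroup_mult \<Rightarrow> 'x set) \<Rightarrow> ('s \<Rightarrow> 'x \<Rightarrow> 'x) \<Rightarrow> bool" where
  "almost_ample TX Dom th \<longleftrightarrow> partial_action TX Dom th \<and>
     locally_compact_space TX \<and> Hausdorff_space TX \<and>
     (\<forall>s. ultraparacompact (subtopology TX (Dom s)))"

definition germ_rel :: "('s::semigroup_mult \<Rightarrow> 'x set) \<Rightarrow> 's \<times> 'x \<Rightarrow> 's \<times> 'x \<Rightarrow> bool" where
  "germ_rel Dom p q \<longleftrightarrow> snd p = snd q \<and>
     (\<exists>u. isg_le u (fst p) \<and> isg_le u (fst q) \<and> snd p \<in> Dom (star u))"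

definition germ :: "('s::semigroup_mult \<Rightarrow> 'x set) \<Rightarrow> 's \<Rightarrow> 'x \<Rightarrow> ('s \<times> 'x) set" where
  "germ Dom s x = {(t, y). y \<in> Dom (star t) \<and> germ_rel Dom (s, x) (t, y)}"

definition germ_basis :: "'x topology \<Rightarrow> ('s::semigroup_mult \<Rightarrow> 'x set) \<Rightarrow> ('s \<times> 'x) set set set" where
  "germ_basis TX Dom = {(germ Dom s) ` U | s U. openin TX U \<and> U \<subseteq> Dom (star s)}"

text \<open>Topology of the groupoid of germs; its topspace is the set of all germs.\<close>
definition germ_top :: "'x topology \<Rightarrow> ('s::semigroup_mult \<Rightarrow> 'x set) \<Rightarrow> ('s \<times> 'x) set topology" where
  "germ_top TX Dom = topology_generated_by (germ_basis TX Dom)"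

text \<open>Graph of the groupoid multiplication: g h is defined and equals k.\<close>
definition germ_prod :: "('s::semigroup_mult \<Rightarrow> 'x set) \<Rightarrow> ('s \<Rightarrow> 'x \<Rightarrow> 'x) \<Rightarrow>
    ('s \<times> 'x) set \<Rightarrow> ('s \<times> 'x) set \<Rightarrow> ('s \<times> 'x) set \<Rightarrow> bool" where
  "germ_prod Dom th g h k \<longleftrightarrow>
     (\<exists>s x t y. x \<in> Dom (star s) \<and> y \<in> Dom (star t) \<and> x = th t y \<and>
        g = germ Dom s x \<and> h = germ Dom t y \<and> k = germ Dom (s * t) y)"

definition germ_groupoids_isomorphic ::
  "'x topology \<Rightarrow> ('s::semigroup_mult \<Rightarrow> 'x set) \<Rightarrow> ('s \<Rightarrow> 'x \<Rightarrow> 'x) \<Rightarrow>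
   'y topology \<Rightarrow> ('t::semigroup_mult \<Rightarrow> 'y set) \<Rightarrow> ('t \<Rightarrow> 'y \<Rightarrow> 'y) \<Rightarrow> bool" where
  "germ_groupoids_isomorphic TX DX th TY DY ga \<longleftrightarrow>
     (\<exists>\<Phi>. homeomorphic_map (germ_top TX DX) (germ_top TY DY) \<Phi> \<and>
        (\<forall>g\<in>topspace (germ_top TX DX). \<forall>h\<in>topspace (germ_top TX DX).
         \<forall>k\<in>topspace (germ_top TX DX).
           germ_prod DX th g h k \<longleftrightarrow> germ_prod DY ga (\<Phi> g) (\<Phi> h) (\<Phi> k)))"

definition star_space :: "'x topology \<Rightarrow> ('s::semigroup_mult \<Rightarrow> 'x set) \<Rightarrow> ('s \<times> 'x) topology" where
  "star_space TX Dom = subtopology (prod_topology (discrete_topology UNIV) TX)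
                          {(s, x). x \<in> Dom (star s)}"

definition cont_orbit_equiv ::
  "'x topology \<Rightarrow> ('s::semigroup_mult \<Rightarrow> 'x set) \<Rightarrow> ('s \<Rightarrow> 'x \<Rightarrow> 'x) \<Rightarrow>
   'y topology \<Rightarrow> ('t::semigroup_mult \<Rightarrow> 'y set) \<Rightarrow> ('t \<Rightarrow> 'y \<Rightarrow> 'y) \<Rightarrow> bool" where
  "cont_orbit_equiv TX DX th TY DY ga \<longleftrightarrow>
     (\<exists>\<phi> \<psi> (a :: 's \<Rightarrow> 'x \<Rightarrow> 't) (b :: 't \<Rightarrow> 'y \<Rightarrow> 's).
        homeomorphic_maps TX TY \<phi> \<psi> \<and>
        continuous_map (star_space TX DX) (discrete_topology UNIV) (\<lambda>(s, x). a s x) \<and>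
        continuous_map (star_space TY DY) (discrete_topology UNIV) (\<lambda>(t, y). b t y) \<and>
        (\<forall>s x. x \<in> DX (star s) \<longrightarrow>
            \<phi> x \<in> DY (star (a s x)) \<and> \<phi> (th s x) = ga (a s x) (\<phi> x)) \<and>
        (\<forall>t y. y \<in> DY (star t) \<longrightarrow>
            \<psi> y \<in> DX (star (b t y)) \<and> \<psi> (ga t y) = th (b t y) (\<psi> y)))"

end

theory Submission
  imports Defs
begin


lemma star_ax:
  assumes IS: "inverse_semigroup TYPE('s::semigroup_mult)"
  shows "(s::'s) * star s * s = s" "star s * s * star s = star s"
proof -
  have "\<exists>!t. s * t * s = s \<and> t * s * t = t" using IS unfolding inverse_semigroup_def by blast
  then have "s * star s * s = s \<and> star s * s * star s = star s"
    unfolding star_def by (rule theI')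
  then show "s * star s * s = s" "star s * s * star s = star s" by auto
qed

lemma star_uniq:
  assumes IS: "inverse_semigroup TYPE('s::semigroup_mult)"
    and "(s::'s) * t * s = s" "t * s * t = t"
  shows "star s = t"
proof -
  have "\<exists>!t. s * t * s = s \<and> t * s * t = t" using IS unfolding inverse_semigroup_def by blast
  then show ?thesis unfolding star_def using assms(2,3) by (simp add: the1_equality)
qed

lemma star_ax':
  assumes IS: "inverse_semigroup TYPE('s::semigroup_mult)"
  shows "(s::'s) * (star s * s) = s" "star s * (s * star s) = star s"
        "(s::'s) * (star s * (s * r)) = s * r" "star s * (s * (star s * r)) = star s * r"
  using star_ax[OF IS, of s] by (simp_all add: mult.assoc) (metis mult.assoc)+

lemma star_star:
  assumes IS: "inverse_semigroup TYPE('s::semigroup_mult)"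
  shows "star (star (s::'s)) = s"
  using star_ax[OF IS, of s] by (intro star_uniq[OF IS]) auto

lemma idem_star:
  assumes IS: "inverse_semigroup TYPE('s::semigroup_mult)" and "(e::'s) * e = e"
  shows "star e = e"
  using assms by (intro star_uniq[OF IS]) auto

lemma idem_comm:
  assumes IS: "inverse_semigroup TYPE('s::semigroup_mult)" and e: "(e::'s) * e = e" and f: "f * f = f"
  shows "e * f = f * e" "(e * f) * (e * f) = e * f"
proof -
  have idm: "(a::'s) * b * (a * b) = a * b" if a: "a * a = a" and b: "b * b = b" for a b
  proof -
    define x where "x = star (a * b)"
    have x1: "a * b * x * (a * b) = a * b" and x2: "x * (a * b) * x = x"
      using star_ax[OF IS, of "a*b"] x_def by auto
    have "a * b * (b * x * a) * (a * b) = a * b"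
    proof -
      have "a * b * (b * x * a) * (a * b) = a * (b * b) * x * (a * a) * b" by (simp add: mult.assoc)
      also have "\<dots> = a * b * x * (a * b)" using a b by (simp add: mult.assoc)
      finally show ?thesis using x1 by simp
    qed
    moreover have "(b * x * a) * (a * b) * (b * x * a) = b * x * a"
    proof -
      have "(b * x * a) * (a * b) * (b * x * a) = b * (x * (a * a) * (b * b) * x) * a" by (simp add: mult.assoc)
      also have "\<dots> = b * (x * (a * b) * x) * a" using a b by (simp add: mult.assoc)
      also have "\<dots> = b * x * a" using x2 by simp
      finally show ?thesis .
    qed
    ultimately have "star (a * b) = b * x * a" by (intro star_uniq[OF IS])
    then have xx: "x = b * x * a" using x_def by simp
    have "x * x = b * (x * (a * b) * x) * a" using xx by (metis mult.assoc)
    also have "\<dots> = x" using x2 xx by simp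
    finally have xx2: "x * x = x" .
    then have "star x = x" by (rule idem_star[OF IS])
    then have "x = a * b" using star_star[OF IS, of "a*b"] x_def by simp
    then show ?thesis using xx2 by simp
  qed
  have ef: "e * f * (e * f) = e * f" and fe: "f * e * (f * e) = f * e" using idm e f by auto
  have "star (e * f) = f * e"
  proof (rule star_uniq[OF IS])
    show "e * f * (f * e) * (e * f) = e * f"
      using ef e f by (metis mult.assoc)
    show "f * e * (e * f) * (f * e) = f * e"
      using fe e f by (metis mult.assoc)
  qed
  moreover have "star (e * f) = e * f" using ef by (rule idem_star[OF IS])
  ultimately show "e * f = f * e" by simp
  show "(e * f) * (e * f) = e * f" by (rule ef)
qed

lemma ss_idem:
  assumes IS: "inverse_semigroup TYPE('s::semigroup_mult)"
  shows "(s::'s) * star s * (s * star s) = s * star s" "star s * s * (star s * s) = star s * s"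
  using star_ax[OF IS, of s] by (metis mult.assoc)+

lemma star_mult:
  assumes IS: "inverse_semigroup TYPE('s::semigroup_mult)"
  shows "star ((s::'s) * t) = star t * star s"
proof (rule star_uniq[OF IS])
  have c: "t * star t * (star s * s) = star s * s * (t * star t)"
    using idem_comm(1)[OF IS ss_idem(1)[OF IS, of t] ss_idem(2)[OF IS, of s]] .
  have "s * t * (star t * star s) * (s * t) = s * (t * star t * (star s * s)) * t"
    by (simp add: mult.assoc)
  also have "\<dots> = (s * star s * s) * (t * star t * t)" using c by (simp add: mult.assoc)
  also have "\<dots> = s * t" using star_ax[OF IS] by simp
  finally show "s * t * (star t * star s) * (s * t) = s * t" .
  have "star t * star s * (s * t) * (star t * star s) = star t * (star s * s * (t * star t)) * star s"
    by (simp add: mult.assoc)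
  also have "\<dots> = star t * (t * star t * (star s * s)) * star s" using c by simp
  also have "\<dots> = (star t * t * star t) * (star s * s * star s)" by (simp add: mult.assoc)
  also have "\<dots> = star t * star s" using star_ax[OF IS] by simp
  finally show "star t * star s * (s * t) * (star t * star s) = star t * star s" .
qed

lemma le_iff:
  assumes IS: "inverse_semigroup TYPE('s::semigroup_mult)"
  shows "isg_le (s::'s) t \<longleftrightarrow> (\<exists>e. e * e = e \<and> s = t * e)"
proof
  assume "isg_le s t"
  then show "\<exists>e. e * e = e \<and> s = t * e" unfolding isg_le_def
    using ss_idem(2)[OF IS, of s] by (metis mult.assoc)
next
  assume "\<exists>e. e * e = e \<and> s = t * e"
  then obtain e where e: "e * e = e" and s: "s = t * e" by blast
  have "star s = e * star t" using s star_mult[OF IS, of t e] idem_star[OF IS e] by simp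
  then have "star s * s = star t * t * e"
    using s idem_comm(1)[OF IS e ss_idem(2)[OF IS, of t]] e by (metis mult.assoc)
  then have "t * star s * s = (t * star t * t) * e" by (simp add: mult.assoc)
  then show "isg_le s t" unfolding isg_le_def using s star_ax[OF IS] by simp
qed

lemma le_refl:
  assumes IS: "inverse_semigroup TYPE('s::semigroup_mult)"
  shows "isg_le (s::'s) s"
  unfolding isg_le_def using star_ax[OF IS] by simp

lemma le_trans:
  assumes IS: "inverse_semigroup TYPE('s::semigroup_mult)"
    and "isg_le (s::'s) t" "isg_le t r"
  shows "isg_le s r"
proof -
  obtain e where e: "e * e = e" "s = t * e" using assms le_iff[OF IS] by blast
  obtain f where f: "f * f = f" "t = r * f" using assms le_iff[OF IS] by blast
  have "f * e * (f * e) = f * e" using idem_comm(2)[OF IS f(1) e(1)] .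
  moreover have "s = r * (f * e)" using e f by (simp add: mult.assoc)
  ultimately show ?thesis using le_iff[OF IS] by blast
qed

lemma conj_idem:
  assumes IS: "inverse_semigroup TYPE('s::semigroup_mult)" and e: "(e::'s) * e = e"
  shows "star r * e * r * (star r * e * r) = star r * e * r" "e * r = r * (star r * e * r)"
proof -
  have c: "e * (r * star r) = r * star r * e"
    using idem_comm(1)[OF IS e ss_idem(1)[OF IS, of r]] by (simp add: mult.assoc)
  have "star r * e * r * (star r * e * r) = star r * (e * (r * star r)) * e * r" by (simp add: mult.assoc)
  also have "\<dots> = (star r * r * star r) * (e * e) * r" using c by (simp add: mult.assoc)
  also have "\<dots> = star r * e * r" using star_ax[OF IS] e by simp
  finally show "star r * e * r * (star r * e * r) = star r * e * r" .
  have "r * (star r * e * r) = (r * star r * e) * r" by (simp add: mult.assoc)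
  also have "\<dots> = (e * (r * star r)) * r" using c by simp
  also have "\<dots> = e * (r * star r * r)" by (simp add: mult.assoc)
  also have "\<dots> = e * r" using star_ax[OF IS] by simp
  finally show "e * r = r * (star r * e * r)" by simp
qed

lemma le_idem_left:
  assumes IS: "inverse_semigroup TYPE('s::semigroup_mult)" and e: "(e::'s) * e = e"
  shows "isg_le (e * r) r"
  using conj_idem[OF IS e, of r] le_iff[OF IS] by blast

lemma le_idem_right:
  assumes IS: "inverse_semigroup TYPE('s::semigroup_mult)" and e: "(e::'s) * e = e"
  shows "isg_le (r * e) r"
  using e le_iff[OF IS] by blast

lemma le_mult_right:
  assumes IS: "inverse_semigroup TYPE('s::semigroup_mult)" and "isg_le (s::'s) t"
  shows "isg_le (s * r) (t * r)"
proof -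
  obtain e where e: "e * e = e" "s = t * e" using assms le_iff[OF IS] by blast
  have "s * r = t * r * (star r * e * r)" using e conj_idem(2)[OF IS e(1), of r] by (simp add: mult.assoc)
  then show ?thesis using conj_idem(1)[OF IS e(1), of r] le_iff[OF IS] by blast
qed

lemma le_idem:
  assumes IS: "inverse_semigroup TYPE('s::semigroup_mult)" and "isg_le (u::'s) e" "e * e = e"
  shows "u * u = u"
proof -
  obtain f where f: "f * f = f" "u = e * f" using assms le_iff[OF IS] by blast
  then show ?thesis using idem_comm(2)[OF IS assms(3) f(1)] by simp
qed

lemma le_meet:
  assumes IS: "inverse_semigroup TYPE('s::semigroup_mult)"
    and u: "isg_le (u::'s) t" and v: "isg_le v t"
  shows "u * (star v * v) = v * (star u * u)"
proof -
  have "u * (star v * v) = t * (star u * u * (star v * v))"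
    using u unfolding isg_le_def by (metis mult.assoc)
  also have "\<dots> = t * (star v * v * (star u * u))"
    using idem_comm(1)[OF IS ss_idem(2)[OF IS, of u] ss_idem(2)[OF IS, of v]] by simp
  also have "\<dots> = v * (star u * u)" using v unfolding isg_le_def by (metis mult.assoc)
  finally show ?thesis .
qed



definition gsrc :: "('s \<times> 'x) set \<Rightarrow> 'x" where
  "gsrc g = snd (SOME p. p \<in> g)"

definition grng :: "('s \<Rightarrow> 'x \<Rightarrow> 'x) \<Rightarrow> ('s \<times> 'x) set \<Rightarrow> 'x" where
  "grng th g = (case (SOME p. p \<in> g) of (s, x) \<Rightarrow> th s x)"

definition unitg :: "('s::semigroup_mult \<Rightarrow> 'x set) \<Rightarrow> 'x \<Rightarrow> ('s \<times> 'x) set" where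
  "unitg D x = germ D (SOME e. e * e = e \<and> x \<in> D e) x"

locale pact =
  fixes TX :: "'x topology" and D :: "'s::semigroup_mult \<Rightarrow> 'x set" and th :: "'s \<Rightarrow> 'x \<Rightarrow> 'x"
  assumes IS: "inverse_semigroup TYPE('s)" and PA: "partial_action TX D th"
begin

lemma D_open: "openin TX (D s)"
  using PA unfolding partial_action_def by blast

lemma D_sub: "D s \<subseteq> topspace TX"
  using D_open openin_subset by blast

lemma th_maps: "x \<in> D (star s) \<Longrightarrow> th s x \<in> D s"
  and th_inv: "x \<in> D (star s) \<Longrightarrow> th (star s) (th s x) = x"
proof -
  assume x: "x \<in> D (star s)"
  have hm: "homeomorphic_maps (subtopology TX (D (star s))) (subtopology TX (D s)) (th s) (th (star s))"
    using PA unfolding partial_action_def by blast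
  then have "continuous_map (subtopology TX (D (star s))) (subtopology TX (D s)) (th s)"
    unfolding homeomorphic_maps_def by blast
  moreover have "x \<in> topspace (subtopology TX (D (star s)))" using x D_sub by auto
  ultimately have "th s x \<in> topspace (subtopology TX (D s))"
    unfolding continuous_map_def by blast
  then show "th s x \<in> D s" by simp
  show "th (star s) (th s x) = x" using hm x D_sub unfolding homeomorphic_maps_def by auto
qed

lemma comp:
  assumes "x \<in> D (star t)" "th t x \<in> D (star s)"
  shows "x \<in> D (star (s * t))" "th (s * t) x = th s (th t x)"
  using PA assms unfolding partial_action_def by blast+

lemma ord:
  assumes "isg_le s t" "x \<in> D (star s)"
  shows "x \<in> D (star t)" "th s x = th t x"
  using PA assms unfolding partial_action_def by blast+

lemma cover: "topspace TX = (\<Union>e\<in>idempotents. D e)"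
  using PA unfolding partial_action_def by blast

lemma cover': "x \<in> topspace TX \<Longrightarrow> \<exists>e. e * e = e \<and> x \<in> D e"
  using cover unfolding idempotents_def by blast

lemma idem_fix:
  assumes e: "e * e = e" and x: "x \<in> D e"
  shows "th e x = x"
proof -
  have se: "star e = e" using idem_star[OF IS e] .
  have x': "x \<in> D (star e)" using x se by simp
  have y: "th e x \<in> D (star e)" using th_maps[OF x'] se by simp
  have "th (e * e) x = th e (th e x)" using comp[OF x' y] by simp
  then have "th e x = th e (th e x)" using e by simp
  moreover have "th e (th e x) = x" using th_inv[OF x'] se by simp
  ultimately show ?thesis by simp
qed

lemma D_ss:
  assumes x: "x \<in> D (star v)"
  shows "x \<in> D (star (star v * v))" "th (star v * v) x = x"
proof -
  have y: "th v x \<in> D (star (star v))" using th_maps[OF x] star_star[OF IS] by simp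
  show "x \<in> D (star (star v * v))" using comp[OF x y] by simp
  show "th (star v * v) x = x" using comp[OF x y] th_inv[OF x] by simp
qed

lemma germ_rel_refl: "germ_rel D (s, x) (s, x) \<longleftrightarrow> x \<in> D (star s)"
  unfolding germ_rel_def using le_refl[OF IS] ord by auto

lemma germ_rel_sym: "germ_rel D p q \<Longrightarrow> germ_rel D q p"
  unfolding germ_rel_def by auto

lemma germ_rel_trans:
  assumes "germ_rel D p q" "germ_rel D q r"
  shows "germ_rel D p r"
proof -
  obtain u where u: "isg_le u (fst p)" "isg_le u (fst q)" "snd p \<in> D (star u)" "snd p = snd q"
    using assms(1) unfolding germ_rel_def by blast
  obtain v where v: "isg_le v (fst q)" "isg_le v (fst r)" "snd q \<in> D (star v)" "snd q = snd r"
    using assms(2) unfolding germ_rel_def by blast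
  define w where "w = u * (star v * v)"
  have w1: "isg_le w u" unfolding w_def by (rule le_idem_right[OF IS ss_idem(2)[OF IS]])
  have w2: "w = v * (star u * u)" unfolding w_def by (rule le_meet[OF IS u(2) v(1)])
  have w3: "isg_le w v" unfolding w2 by (rule le_idem_right[OF IS ss_idem(2)[OF IS]])
  have x1: "snd p \<in> D (star (star v * v))" "th (star v * v) (snd p) = snd p"
    using D_ss[of "snd p" v] v(3) u(4) by auto
  have "snd p \<in> D (star w)" unfolding w_def using comp[OF x1(1)] x1(2) u(3) by simp
  then show ?thesis unfolding germ_rel_def
    using le_trans[OF IS w1 u(1)] le_trans[OF IS w3 v(2)] u(4) v(4) by auto
qed

lemma mem_germ: "x \<in> D (star s) \<Longrightarrow> (s, x) \<in> germ D s x"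
  unfolding germ_def using germ_rel_refl by auto

lemma germ_eq_iff:
  assumes x: "x \<in> D (star s)"
  shows "germ D s x = germ D t y \<longleftrightarrow> y \<in> D (star t) \<and> germ_rel D (s, x) (t, y)"
proof
  assume "germ D s x = germ D t y"
  then have "(s, x) \<in> germ D t y" using mem_germ[OF x] by simp
  then have "germ_rel D (t, y) (s, x)" unfolding germ_def by simp
  then have r: "germ_rel D (s, x) (t, y)" by (rule germ_rel_sym)
  then have "y = x" unfolding germ_rel_def by simp
  then have "y \<in> D (star t)" using r unfolding germ_rel_def using ord by auto
  then show "y \<in> D (star t) \<and> germ_rel D (s, x) (t, y)" using r by simp
next
  assume "y \<in> D (star t) \<and> germ_rel D (s, x) (t, y)"
  then have r: "germ_rel D (s, x) (t, y)" by simp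
  show "germ D s x = germ D t y"
    unfolding germ_def using r germ_rel_sym germ_rel_trans by blast
qed

lemma germ_le:
  assumes "isg_le s t" "x \<in> D (star s)"
  shows "germ D s x = germ D t x" "x \<in> D (star t)"
proof -
  show "x \<in> D (star t)" using ord assms by blast
  then show "germ D s x = germ D t x"
    using assms germ_eq_iff unfolding germ_rel_def by (metis fst_conv le_refl[OF IS] snd_conv)
qed

lemma germ_memD: "(t, y) \<in> germ D s x \<Longrightarrow> x \<in> D (star s) \<Longrightarrow> y = x \<and> th t y = th s x"
  unfolding germ_def germ_rel_def using ord by (auto, metis)

lemma some_germ:
  assumes x: "x \<in> D (star s)"
  shows "snd (SOME p. p \<in> germ D s x) = x \<and> (case (SOME p. p \<in> germ D s x) of (t, y) \<Rightarrow> th t y) = th s x"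
proof -
  have "(SOME p. p \<in> germ D s x) \<in> germ D s x" using mem_germ[OF x] by (rule someI)
  then show ?thesis using germ_memD[OF _ x] by (cases "SOME p. p \<in> germ D s x") auto
qed

lemma gsrc_germ: "x \<in> D (star s) \<Longrightarrow> gsrc (germ D s x) = x"
  unfolding gsrc_def using some_germ by blast

lemma grng_germ: "x \<in> D (star s) \<Longrightarrow> grng th (germ D s x) = th s x"
  unfolding grng_def using some_germ by blast

lemma germ_right_unit:
  assumes x: "x \<in> D (star s)" and e: "e * e = e" "x \<in> D e"
  shows "x \<in> D (star (s * e))" "germ D (s * e) x = germ D s x"
proof -
  have se: "star e = e" using idem_star[OF IS e(1)] .
  show 1: "x \<in> D (star (s * e))" using comp[of x e s] se e idem_fix x by simp
  show "germ D (s * e) x = germ D s x" using germ_le[OF le_idem_right[OF IS e(1)] 1] by simp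
qed

lemma germ_left_unit:
  assumes x: "x \<in> D (star s)" and e: "e * e = e" "th s x \<in> D e"
  shows "x \<in> D (star (e * s))" "germ D (e * s) x = germ D s x"
proof -
  have se: "star e = e" using idem_star[OF IS e(1)] .
  show 1: "x \<in> D (star (e * s))" using comp[of x s e] se e x by simp
  show "germ D (e * s) x = germ D s x" using germ_le[OF le_idem_left[OF IS e(1)] 1] by simp
qed


lemma G_eq: "topspace (germ_top TX D) = {germ D s x | s x. x \<in> D (star s)}"
proof -
  have "topspace (germ_top TX D) = \<Union>(germ_basis TX D)"
    unfolding germ_top_def by simp
  also have "\<dots> = {germ D s x | s x. x \<in> D (star s)}"
  proof
    show "\<Union>(germ_basis TX D) \<subseteq> {germ D s x | s x. x \<in> D (star s)}"
      unfolding germ_basis_def by blast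
    show "{germ D s x | s x. x \<in> D (star s)} \<subseteq> \<Union>(germ_basis TX D)"
    proof
      fix g assume "g \<in> {germ D s x | s x. x \<in> D (star s)}"
      then obtain s x where "x \<in> D (star s)" "g = germ D s x" by blast
      moreover have "germ D s ` D (star s) \<in> germ_basis TX D"
        unfolding germ_basis_def using D_open by blast
      ultimately show "g \<in> \<Union>(germ_basis TX D)" by blast
    qed
  qed
  finally show ?thesis .
qed

lemma unitg_eq:
  assumes e: "e * e = e" "x \<in> D e"
  shows "unitg D x = germ D e x"
proof -
  define f where "f = (SOME e. e * e = e \<and> x \<in> D e)"
  have f: "f * f = f" "x \<in> D f" unfolding f_def using someI[of "\<lambda>e. e * e = e \<and> x \<in> D e"] e by auto
  have "germ D (e * f) x = germ D e x"
    using germ_right_unit[of x e f] e f idem_star[OF IS e(1)] by simp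
  moreover have "germ D (f * e) x = germ D f x"
    using germ_right_unit[of x f e] e f idem_star[OF IS f(1)] by simp
  moreover have "e * f = f * e" using idem_comm(1)[OF IS e(1) f(1)] .
  ultimately show ?thesis unfolding unitg_def f_def[symmetric] by simp
qed

lemma unitg_props:
  assumes x: "x \<in> topspace TX"
  shows "unitg D x \<in> topspace (germ_top TX D)" "gsrc (unitg D x) = x" "grng th (unitg D x) = x"
proof -
  obtain e where e: "e * e = e" "x \<in> D e" using cover'[OF x] by blast
  have se: "star e = e" using idem_star[OF IS e(1)] .
  have u: "unitg D x = germ D e x" using unitg_eq[OF e] .
  show "unitg D x \<in> topspace (germ_top TX D)" unfolding G_eq u
    by (rule CollectI, intro exI[of _ e] exI[of _ x]) (simp add: se e(2))
  show "gsrc (unitg D x) = x" unfolding u using gsrc_germ[of x e] e se by simp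
  show "grng th (unitg D x) = x" unfolding u using grng_germ[of x e] e se idem_fix by simp
qed

lemma P_src:
  assumes "germ_prod D th g h k"
  shows "gsrc k = gsrc h" "grng th k = grng th g" "gsrc g = grng th h" "k \<in> topspace (germ_top TX D)"
proof -
  obtain s x t y where A: "x \<in> D (star s)" "y \<in> D (star t)" "x = th t y"
    "g = germ D s x" "h = germ D t y" "k = germ D (s * t) y"
    using assms unfolding germ_prod_def by blast
  have c: "y \<in> D (star (s * t))" "th (s * t) y = th s x" using comp[of y t s] A by auto
  show "gsrc k = gsrc h" using A c gsrc_germ by simp
  show "grng th k = grng th g" using A c grng_germ by simp
  show "gsrc g = grng th h" using A c grng_germ gsrc_germ by simp
  show "k \<in> topspace (germ_top TX D)" unfolding G_eq using A c by blast
qed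

lemma P_right:
  assumes g: "g \<in> topspace (germ_top TX D)"
  shows "germ_prod D th g (unitg D (gsrc g)) g"
proof -
  obtain s x where A: "x \<in> D (star s)" "g = germ D s x" using g unfolding G_eq by blast
  obtain e where e: "e * e = e" "x \<in> D e" using cover'[of x] A D_sub by blast
  have se: "star e = e" using idem_star[OF IS e(1)] .
  have "unitg D (gsrc g) = germ D e x" using A gsrc_germ unitg_eq[OF e] by simp
  moreover have "g = germ D (s * e) x" using germ_right_unit[OF A(1) e] A by simp
  ultimately show ?thesis unfolding germ_prod_def
    by (intro exI[of _ s] exI[of _ x] exI[of _ e]) (simp add: A e se idem_fix[OF e])
qed

lemma P_left:
  assumes g: "g \<in> topspace (germ_top TX D)"
  shows "germ_prod D th (unitg D (grng th g)) g g"
proof -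
  obtain s x where A: "x \<in> D (star s)" "g = germ D s x" using g unfolding G_eq by blast
  have z: "th s x \<in> topspace TX" using th_maps[OF A(1)] D_sub by blast
  obtain e where e: "e * e = e" "th s x \<in> D e" using cover'[OF z] by blast
  have se: "star e = e" using idem_star[OF IS e(1)] .
  have "unitg D (grng th g) = germ D e (th s x)" using A grng_germ unitg_eq[OF e] by simp
  moreover have "g = germ D (e * s) x" using germ_left_unit[OF A(1) e] A by simp
  ultimately show ?thesis unfolding germ_prod_def
    by (intro exI[of _ e] exI[of _ "th s x"] exI[of _ s] exI[of _ x]) (simp add: A e se)
qed

definition isU :: "('s \<times> 'x) set \<Rightarrow> bool" where
  "isU g \<longleftrightarrow> g \<in> topspace (germ_top TX D) \<and>
     (\<forall>h\<in>topspace (germ_top TX D). \<forall>k\<in>topspace (germ_top TX D). germ_prod D th g h k \<longrightarrow> k = h)"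

lemma isU_iff: "isU g \<longleftrightarrow> (\<exists>x\<in>topspace TX. g = unitg D x)"
proof
  assume U: "isU g"
  then have g: "g \<in> topspace (germ_top TX D)" unfolding isU_def by blast
  obtain s0 x0 where g0: "x0 \<in> D (star s0)" "g = germ D s0 x0" using g unfolding G_eq by blast
  have x: "gsrc g \<in> topspace TX" using g0 gsrc_germ D_sub by auto
  have "g = unitg D (gsrc g)"
    using U P_right[OF g] unitg_props(1)[OF x] g unfolding isU_def by blast
  then show "\<exists>x\<in>topspace TX. g = unitg D x" using x by blast
next
  assume "\<exists>x\<in>topspace TX. g = unitg D x"
  then obtain z where z: "z \<in> topspace TX" "g = unitg D z" by blast
  obtain e where e: "e * e = e" "z \<in> D e" using cover'[OF z(1)] by blast
  have se: "star e = e" using idem_star[OF IS e(1)] .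
  have gz: "g = germ D e z" using z unitg_eq[OF e] by simp
  have "k = h" if P: "germ_prod D th g h k" for h k
  proof -
    obtain s x t y where A: "x \<in> D (star s)" "y \<in> D (star t)" "x = th t y"
      "g = germ D s x" "h = germ D t y" "k = germ D (s * t) y"
      using P unfolding germ_prod_def by blast
    have "germ D s x = germ D e z" using A gz by simp
    then have "germ_rel D (s, x) (e, z)" using germ_eq_iff[OF A(1)] by blast
    then obtain u where u: "isg_le u s" "isg_le u e" "x \<in> D (star u)" "x = z"
      unfolding germ_rel_def by auto
    have uu: "u * u = u" using le_idem[OF IS u(2) e(1)] .
    have su: "star u = u" using idem_star[OF IS uu] .
    have y1: "y \<in> D (star (u * t))" using comp[of y t u] A u by simp
    have "germ D (u * t) y = germ D (s * t) y"
      using germ_le[OF le_mult_right[OF IS u(1)] y1] by simp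
    moreover have "germ D (u * t) y = germ D t y"
      using germ_left_unit[OF A(2) uu] A u su by simp
    ultimately show "k = h" using A by simp
  qed
  moreover have "g \<in> topspace (germ_top TX D)" using z unitg_props by simp
  ultimately show "isU g" unfolding isU_def by blast
qed

lemma basis_preimage:
  assumes U: "openin TX U" "U \<subseteq> D (star r)"
  shows "openin TX {x \<in> D (star s). germ D s x \<in> germ D r ` U}"
proof (subst openin_subopen, intro ballI)
  fix x assume "x \<in> {x \<in> D (star s). germ D s x \<in> germ D r ` U}"
  then obtain u where x: "x \<in> D (star s)" "u \<in> U" "germ D s x = germ D r u" by blast
  have "germ_rel D (s, x) (r, u)" using germ_eq_iff[OF x(1)] x(3) by blast
  then have "x = u \<and> (\<exists>w. isg_le w s \<and> isg_le w r \<and> x \<in> D (star w))"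
    unfolding germ_rel_def prod.sel by blast
  then obtain w where w: "isg_le w s" "isg_le w r" "x \<in> D (star w)" "u = x"
    by blast
  define N where "N = D (star w) \<inter> U"
  have "openin TX N" unfolding N_def using D_open U(1) by (rule openin_Int)
  moreover have "x \<in> N" unfolding N_def using w x by auto
  moreover have "N \<subseteq> {x \<in> D (star s). germ D s x \<in> germ D r ` U}"
  proof
    fix x' assume "x' \<in> N"
    then have x': "x' \<in> D (star w)" "x' \<in> U" unfolding N_def by auto
    have e1: "germ D s x' = germ D w x'" "x' \<in> D (star s)" using germ_le[OF w(1) x'(1)] by auto
    have e2: "germ D r x' = germ D w x'" using germ_le[OF w(2) x'(1)] by auto
    show "x' \<in> {x \<in> D (star s). germ D s x \<in> germ D r ` U}" using e1 e2 x'(2) by auto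
  qed
  ultimately show "\<exists>T. openin TX T \<and> x \<in> T \<and> T \<subseteq> {x \<in> D (star s). germ D s x \<in> germ D r ` U}"
    by blast
qed

lemma germ_preimage:
  assumes "openin (germ_top TX D) Q"
  shows "openin TX {x \<in> D (star s). germ D s x \<in> Q}"
proof -
  have "generate_topology_on (germ_basis TX D) Q"
    using assms unfolding germ_top_def by (rule openin_topology_generated_by)
  then show ?thesis
  proof (induct)
    case Empty
    then show ?case by simp
  next
    case (Int a b)
    have "{x \<in> D (star s). germ D s x \<in> a \<inter> b} =
          {x \<in> D (star s). germ D s x \<in> a} \<inter> {x \<in> D (star s). germ D s x \<in> b}" by blast
    then show ?case using openin_Int[OF Int(2) Int(4)] by simp
  next
    case (UN K)
    have "{x \<in> D (star s). germ D s x \<in> \<Union>K} = (\<Union>k\<in>K. {x \<in> D (star s). germ D s x \<in> k})" by blast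
    moreover have "openin TX (\<Union>k\<in>K. {x \<in> D (star s). germ D s x \<in> k})"
      using UN.hyps by (intro openin_Union) blast
    ultimately show ?case by simp
  next
    case (Basis B)
    have "\<exists>r U. B = germ D r ` U \<and> openin TX U \<and> U \<subseteq> D (star r)"
      using Basis unfolding germ_basis_def by simp
    then obtain r U where B: "B = germ D r ` U" "openin TX U" "U \<subseteq> D (star r)"
      by blast
    show ?case using basis_preimage[OF B(2,3)] B(1) by simp
  qed
qed

lemma unitg_cont: "continuous_map TX (germ_top TX D) (unitg D)"
  unfolding continuous_map_def
proof (intro conjI allI impI)
  show "unitg D \<in> topspace TX \<rightarrow> topspace (germ_top TX D)" using unitg_props by blast
  fix Q assume Q: "openin (germ_top TX D) Q"
  have "{x \<in> topspace TX. unitg D x \<in> Q} = (\<Union>e\<in>idempotents. {x \<in> D (star e). germ D e x \<in> Q})"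
  proof
    show "{x \<in> topspace TX. unitg D x \<in> Q} \<subseteq> (\<Union>e\<in>idempotents. {x \<in> D (star e). germ D e x \<in> Q})"
    proof
      fix x assume x: "x \<in> {x \<in> topspace TX. unitg D x \<in> Q}"
      obtain e where e: "e * e = e" "x \<in> D e" using cover' x by blast
      then show "x \<in> (\<Union>e\<in>idempotents. {x \<in> D (star e). germ D e x \<in> Q})"
        using x unitg_eq[OF e] idem_star[OF IS e(1)] unfolding idempotents_def by auto
    qed
    show "(\<Union>e\<in>idempotents. {x \<in> D (star e). germ D e x \<in> Q}) \<subseteq> {x \<in> topspace TX. unitg D x \<in> Q}"
    proof
      fix x assume "x \<in> (\<Union>e\<in>idempotents. {x \<in> D (star e). germ D e x \<in> Q})"
      then obtain e where e: "e * e = e" "x \<in> D (star e)" "germ D e x \<in> Q"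
        unfolding idempotents_def by blast
      have e2: "x \<in> D e" using e idem_star[OF IS e(1)] by simp
      show "x \<in> {x \<in> topspace TX. unitg D x \<in> Q}"
        using unitg_eq[OF e(1) e2] e(3) e2 D_sub by auto
    qed
  qed
  then show "openin TX {x \<in> topspace TX. unitg D x \<in> Q}" using germ_preimage[OF Q] by auto
qed

lemma gsrc_cont: "continuous_map (germ_top TX D) TX gsrc"
  unfolding continuous_map_def
proof (intro conjI allI impI)
  show "gsrc \<in> topspace (germ_top TX D) \<rightarrow> topspace TX"
  proof
    fix g assume "g \<in> topspace (germ_top TX D)"
    then obtain s0 x0 where g0: "x0 \<in> D (star s0)" "g = germ D s0 x0" unfolding G_eq by blast
    then show "gsrc g \<in> topspace TX" using gsrc_germ D_sub by auto
  qed
  fix V assume V: "openin TX V"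
  have "{g \<in> topspace (germ_top TX D). gsrc g \<in> V} = (\<Union>s. germ D s ` (V \<inter> D (star s)))"
  proof (intro equalityI subsetI)
    fix g assume "g \<in> {g \<in> topspace (germ_top TX D). gsrc g \<in> V}"
    then obtain s0 x0 where g0: "x0 \<in> D (star s0)" "g = germ D s0 x0" "gsrc g \<in> V" unfolding G_eq by blast
    then show "g \<in> (\<Union>s. germ D s ` (V \<inter> D (star s)))" using gsrc_germ by auto
  next
    fix g assume "g \<in> (\<Union>s. germ D s ` (V \<inter> D (star s)))"
    then obtain s0 x0 where g0: "x0 \<in> D (star s0)" "g = germ D s0 x0" "x0 \<in> V" by blast
    then show "g \<in> {g \<in> topspace (germ_top TX D). gsrc g \<in> V}" unfolding G_eq using gsrc_germ by auto
  qed
  moreover have "openin (germ_top TX D) (germ D s ` (V \<inter> D (star s)))" for s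
    unfolding germ_top_def
    by (rule topology_generated_by_Basis) (unfold germ_basis_def, use V D_open in blast)
  ultimately show "openin (germ_top TX D) {g \<in> topspace (germ_top TX D). gsrc g \<in> V}" by auto
qed

lemma star_space_cont:
  assumes "\<And>s t. openin TX {x \<in> D (star s). f s x = t}"
  shows "continuous_map (star_space TX D) (discrete_topology UNIV) (\<lambda>(s, x). f s x)"
  unfolding continuous_map_def
proof (intro conjI allI impI)
  show "(\<lambda>(s, x). f s x) \<in> topspace (star_space TX D) \<rightarrow> topspace (discrete_topology UNIV)" by simp
  fix U
  have op: "openin TX {x \<in> D (star s). f s x \<in> U}" for s
  proof -
    have "{x \<in> D (star s). f s x \<in> U} = (\<Union>t\<in>U. {x \<in> D (star s). f s x = t})" by blast
    then show ?thesis using assms by auto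
  qed
  have ts: "topspace (star_space TX D) = {(s, x). x \<in> D (star s)}"
    unfolding star_space_def using D_sub by auto
  have "{p \<in> topspace (star_space TX D). (case p of (s, x) \<Rightarrow> f s x) \<in> U}
      = (\<Union>s. {s} \<times> {x \<in> D (star s). f s x \<in> U}) \<inter> {(s, x). x \<in> D (star s)}"
    unfolding ts by auto
  moreover have "openin (prod_topology (discrete_topology UNIV) TX) (\<Union>s. {s} \<times> {x \<in> D (star s). f s x \<in> U})"
    using op by (intro openin_Union) (auto simp: openin_prod_Times_iff)
  ultimately show "openin (star_space TX D) {p \<in> topspace (star_space TX D). (case p of (s, x) \<Rightarrow> f s x) \<in> U}"
    unfolding star_space_def by (simp only: openin_subtopology_Int)
qed

end


context pact begin

lemma gsrc_top: "g \<in> topspace (germ_top TX D) \<Longrightarrow> gsrc g \<in> topspace TX"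
  using gsrc_cont unfolding continuous_map_def by blast

lemma grng_top: "g \<in> topspace (germ_top TX D) \<Longrightarrow> grng th g \<in> topspace TX"
proof -
  assume "g \<in> topspace (germ_top TX D)"
  then obtain s x where A: "x \<in> D (star s)" "g = germ D s x" unfolding G_eq by blast
  have "th s x \<in> topspace TX" using th_maps[OF A(1)] D_sub by blast
  then show ?thesis using A grng_germ by simp
qed

lemma germ_in_G: "x \<in> D (star s) \<Longrightarrow> germ D s x \<in> topspace (germ_top TX D)"
  unfolding G_eq by blast

end

locale gpair = X: pact TX DX th + Y: pact TY DY ga
  for TX :: "'x topology" and DX :: "'s::semigroup_mult \<Rightarrow> 'x set" and th
  and TY :: "'y topology" and DY :: "'t::semigroup_mult \<Rightarrow> 'y set" and ga +
  fixes Phi :: "('s \<times> 'x) set \<Rightarrow> ('t \<times> 'y) set"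
  assumes hom: "homeomorphic_map (germ_top TX DX) (germ_top TY DY) Phi"
  and pres: "\<forall>g\<in>topspace (germ_top TX DX). \<forall>h\<in>topspace (germ_top TX DX). \<forall>k\<in>topspace (germ_top TX DX).
      germ_prod DX th g h k \<longleftrightarrow> germ_prod DY ga (Phi g) (Phi h) (Phi k)"
  and UP: "\<forall>s. ultraparacompact (subtopology TX (DX s))"
begin

lemma surj: "Phi ` topspace (germ_top TX DX) = topspace (germ_top TY DY)"
  using homeomorphic_imp_surjective_map[OF hom] .

lemma inj: "inj_on Phi (topspace (germ_top TX DX))"
  using homeomorphic_imp_injective_map[OF hom] .

lemma Phi_cont: "continuous_map (germ_top TX DX) (germ_top TY DY) Phi"
  using homeomorphic_imp_continuous_map[OF hom] .

lemma isU_pres: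
  assumes g: "g \<in> topspace (germ_top TX DX)"
  shows "X.isU g \<longleftrightarrow> Y.isU (Phi g)"
proof
  assume U: "X.isU g"
  have "k' = h'" if h': "h' \<in> topspace (germ_top TY DY)" and k': "k' \<in> topspace (germ_top TY DY)"
    and P: "germ_prod DY ga (Phi g) h' k'" for h' k'
  proof -
    obtain h where h: "h \<in> topspace (germ_top TX DX)" "h' = Phi h" using h' surj by blast
    obtain k where k: "k \<in> topspace (germ_top TX DX)" "k' = Phi k" using k' surj by blast
    have "germ_prod DX th g h k" using pres g h k P by blast
    then have "k = h" using U h k unfolding X.isU_def by blast
    then show ?thesis using h k by simp
  qed
  moreover have "Phi g \<in> topspace (germ_top TY DY)" using g surj by blast
  ultimately show "Y.isU (Phi g)" unfolding Y.isU_def by blast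
next
  assume U: "Y.isU (Phi g)"
  have "k = h" if h: "h \<in> topspace (germ_top TX DX)" and k: "k \<in> topspace (germ_top TX DX)"
    and P: "germ_prod DX th g h k" for h k
  proof -
    have "germ_prod DY ga (Phi g) (Phi h) (Phi k)" using pres g h k P by blast
    moreover have "Phi h \<in> topspace (germ_top TY DY)" "Phi k \<in> topspace (germ_top TY DY)"
      using h k surj by blast+
    ultimately have "Phi k = Phi h" using U unfolding Y.isU_def by blast
    then show ?thesis using inj h k unfolding inj_on_def by blast
  qed
  then show "X.isU g" unfolding X.isU_def using g by blast
qed

definition phi :: "'x \<Rightarrow> 'y" where
  "phi x = gsrc (Phi (unitg DX x))"

lemma Phi_unit:
  assumes x: "x \<in> topspace TX"
  shows "Phi (unitg DX x) = unitg DY (phi x)" "phi x \<in> topspace TY"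
proof -
  have "X.isU (unitg DX x)" using X.isU_iff x by blast
  then have "Y.isU (Phi (unitg DX x))" using isU_pres X.unitg_props(1)[OF x] by blast
  then obtain y where y: "y \<in> topspace TY" "Phi (unitg DX x) = unitg DY y" using Y.isU_iff by blast
  then have "phi x = y" unfolding phi_def using Y.unitg_props(2)[OF y(1)] by simp
  then show "Phi (unitg DX x) = unitg DY (phi x)" "phi x \<in> topspace TY" using y by auto
qed

lemma src_pres:
  assumes g: "g \<in> topspace (germ_top TX DX)"
  shows "gsrc (Phi g) = phi (gsrc g)"
proof -
  have x: "gsrc g \<in> topspace TX" using X.gsrc_top[OF g] .
  have "germ_prod DY ga (Phi g) (Phi (unitg DX (gsrc g))) (Phi g)"
    using pres g X.P_right[OF g] X.unitg_props(1)[OF x] by blast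
  then have "gsrc (Phi g) = grng ga (Phi (unitg DX (gsrc g)))" by (rule Y.P_src(3))
  also have "\<dots> = phi (gsrc g)" using Phi_unit[OF x] Y.unitg_props(3) by simp
  finally show ?thesis .
qed

lemma rng_pres:
  assumes g: "g \<in> topspace (germ_top TX DX)"
  shows "grng ga (Phi g) = phi (grng th g)"
proof -
  have z: "grng th g \<in> topspace TX" using X.grng_top[OF g] .
  have "germ_prod DY ga (Phi (unitg DX (grng th g))) (Phi g) (Phi g)"
    using pres g X.P_left[OF g] X.unitg_props(1)[OF z] by blast
  then have "gsrc (Phi (unitg DX (grng th g))) = grng ga (Phi g)" by (rule Y.P_src(3))
  moreover have "gsrc (Phi (unitg DX (grng th g))) = phi (grng th g)"
    using Phi_unit[OF z] Y.unitg_props(2) by simp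
  ultimately show ?thesis by simp
qed

lemma phi_cont: "continuous_map TX TY phi"
proof -
  have "continuous_map TX TY (gsrc \<circ> Phi \<circ> unitg DX)"
    using continuous_map_compose[OF X.unitg_cont continuous_map_compose[OF Phi_cont Y.gsrc_cont]] .
  moreover have "gsrc \<circ> Phi \<circ> unitg DX = phi" unfolding phi_def by auto
  ultimately show ?thesis by simp
qed

definition W :: "'s \<Rightarrow> 't \<Rightarrow> 'x set" where
  "W s t = {x \<in> DX (star s). \<exists>y \<in> DY (star t). Phi (germ DX s x) = germ DY t y}"

lemma W_open: "openin TX (W s t)"
proof -
  define Q where "Q = {g \<in> topspace (germ_top TX DX). Phi g \<in> germ DY t ` DY (star t)}"
  have B: "openin (germ_top TY DY) (germ DY t ` DY (star t))"
    unfolding germ_top_def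
    by (rule topology_generated_by_Basis) (unfold germ_basis_def, use Y.D_open in blast)
  have "openin (germ_top TX DX) Q" unfolding Q_def using Phi_cont B unfolding continuous_map_def by blast
  then have "openin TX {x \<in> DX (star s). germ DX s x \<in> Q}" by (rule X.germ_preimage)
  moreover have "{x \<in> DX (star s). germ DX s x \<in> Q} = W s t"
    unfolding Q_def W_def using X.germ_in_G by blast
  ultimately show ?thesis by simp
qed

lemma W_cover: "x \<in> DX (star s) \<Longrightarrow> \<exists>t. x \<in> W s t"
proof -
  assume x: "x \<in> DX (star s)"
  have "Phi (germ DX s x) \<in> topspace (germ_top TY DY)" using X.germ_in_G[OF x] surj by blast
  then obtain t y where "y \<in> DY (star t)" "Phi (germ DX s x) = germ DY t y" unfolding Y.G_eq by blast
  then show ?thesis unfolding W_def using x by blast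
qed

lemma W_good:
  assumes "x \<in> W s t"
  shows "phi x \<in> DY (star t)" "phi (th s x) = ga t (phi x)"
proof -
  obtain y where A: "x \<in> DX (star s)" "y \<in> DY (star t)" "Phi (germ DX s x) = germ DY t y"
    using assms unfolding W_def by blast
  have g: "germ DX s x \<in> topspace (germ_top TX DX)" using X.germ_in_G[OF A(1)] .
  have "y = phi x" using src_pres[OF g] A X.gsrc_germ Y.gsrc_germ by simp
  moreover have "ga t y = phi (th s x)" using rng_pres[OF g] A X.grng_germ Y.grng_germ by simp
  ultimately show "phi x \<in> DY (star t)" "phi (th s x) = ga t (phi x)" using A by auto
qed

lemma a_exists:
  "\<exists>a :: 's \<Rightarrow> 'x \<Rightarrow> 't. continuous_map (star_space TX DX) (discrete_topology UNIV) (\<lambda>(s, x). a s x) \<and>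
     (\<forall>s x. x \<in> DX (star s) \<longrightarrow> phi x \<in> DY (star (a s x)) \<and> phi (th s x) = ga (a s x) (phi x))"
proof -
  let ?S = "\<lambda>s. subtopology TX (DX (star s))"
  let ?P = "\<lambda>s \<V>. (\<forall>V\<in>\<V>. openin (?S s) V \<and> closedin (?S s) V \<and> (\<exists>U\<in>range (W s). V \<subseteq> U)) \<and>
              \<Union>\<V> = topspace (?S s) \<and> pairwise disjnt \<V>"
  have "\<exists>\<V>. ?P s \<V>" for s
  proof -
    have up: "ultraparacompact (?S s)" using UP by blast
    have "\<forall>U\<in>range (W s). openin (?S s) U"
      using W_open W_def by (auto intro: subset_openin_subtopology)
    moreover have "topspace (?S s) \<subseteq> \<Union>(range (W s))" using W_cover by auto
    ultimately show ?thesis using up unfolding ultraparacompact_def by blast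
  qed
  then have "\<exists>VV. \<forall>s. ?P s (VV s)" by (rule choice[OF allI])
  then obtain VV where VV0: "\<forall>s. ?P s (VV s)" by (rule exE)
  have VV: "?P s (VV s)" for s using VV0 by (rule spec)
  have VV1: "openin (?S s) V" "\<exists>t. V \<subseteq> W s t" if "V \<in> VV s" for s V
    using VV[of s] that by auto
  have VV2: "\<Union>(VV s) = topspace (?S s)" "pairwise disjnt (VV s)" for s
    using VV[of s] by auto
  define cv where "cv s V = (SOME t. V \<subseteq> W s t)" for s V
  define a where "a s x = cv s (SOME V. V \<in> VV s \<and> x \<in> V)" for s x
  have V0: "(SOME V. V \<in> VV s \<and> x \<in> V) \<in> VV s \<and> x \<in> (SOME V. V \<in> VV s \<and> x \<in> V)"
    if x: "x \<in> DX (star s)" for s x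
  proof -
    have "x \<in> topspace (?S s)" using x X.D_sub by auto
    then have "\<exists>V. V \<in> VV s \<and> x \<in> V" using VV2(1)[of s] by blast
    then show ?thesis by (rule someI_ex)
  qed
  have cvW: "V \<subseteq> W s (cv s V)" if "V \<in> VV s" for s V
  proof -
    have "\<exists>t. V \<subseteq> W s t" using VV1 that by blast
    then show ?thesis unfolding cv_def by (rule someI_ex)
  qed
  have aW: "x \<in> W s (a s x)" if x: "x \<in> DX (star s)" for s x
    using V0[OF x] cvW unfolding a_def by blast
  have lvl: "{x \<in> DX (star s). a s x = t} = \<Union>{V \<in> VV s. cv s V = t}" for s t
  proof (intro equalityI subsetI)
    fix x assume "x \<in> {x \<in> DX (star s). a s x = t}"
    then show "x \<in> \<Union>{V \<in> VV s. cv s V = t}" using V0 unfolding a_def by blast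
  next
    fix x assume "x \<in> \<Union>{V \<in> VV s. cv s V = t}"
    then obtain V where V: "V \<in> VV s" "cv s V = t" "x \<in> V" by blast
    have "V \<subseteq> topspace (?S s)" using VV1(1)[OF V(1)] openin_subset by blast
    then have x: "x \<in> DX (star s)" using V by auto
    have "(SOME V. V \<in> VV s \<and> x \<in> V) = V"
      using V0[OF x] V VV2(2)[of s] unfolding pairwise_def disjnt_def by blast
    then show "x \<in> {x \<in> DX (star s). a s x = t}" using x V unfolding a_def by simp
  qed
  have "openin TX {x \<in> DX (star s). a s x = t}" for s t
  proof -
    have "openin TX V" if "V \<in> VV s" for V
      using openin_trans_full[OF VV1(1)[OF that] X.D_open] .
    then show ?thesis unfolding lvl by auto
  qed
  then have "continuous_map (star_space TX DX) (discrete_topology UNIV) (\<lambda>(s, x). a s x)"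
    by (rule X.star_space_cont)
  moreover have "\<forall>s x. x \<in> DX (star s) \<longrightarrow> phi x \<in> DY (star (a s x)) \<and> phi (th s x) = ga (a s x) (phi x)"
    using aW W_good by blast
  ultimately show ?thesis by blast
qed

end



theorem theorem8p9:
  fixes TX :: "'x topology" and DX :: "'s::semigroup_mult \<Rightarrow> 'x set" and th :: "'s \<Rightarrow> 'x \<Rightarrow> 'x"
    and TY :: "'y topology" and DY :: "'t::semigroup_mult \<Rightarrow> 'y set" and ga :: "'t \<Rightarrow> 'y \<Rightarrow> 'y"
  assumes "inverse_semigroup TYPE('s)" and "inverse_semigroup TYPE('t)"
    and "almost_ample TX DX th" and "almost_ample TY DY ga"
    and "germ_groupoids_isomorphic TX DX th TY DY ga"
  shows "cont_orbit_equiv TX DX th TY DY ga"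
proof -
  have pX: "pact TX DX th" using assms(1,3) unfolding pact_def almost_ample_def by blast
  have pY: "pact TY DY ga" using assms(2,4) unfolding pact_def almost_ample_def by blast
  have uX: "\<forall>s. ultraparacompact (subtopology TX (DX s))" using assms(3) unfolding almost_ample_def by blast
  have uY: "\<forall>t. ultraparacompact (subtopology TY (DY t))" using assms(4) unfolding almost_ample_def by blast
  obtain Phi where hom: "homeomorphic_map (germ_top TX DX) (germ_top TY DY) Phi"
    and pres: "\<forall>g\<in>topspace (germ_top TX DX). \<forall>h\<in>topspace (germ_top TX DX). \<forall>k\<in>topspace (germ_top TX DX).
      germ_prod DX th g h k \<longleftrightarrow> germ_prod DY ga (Phi g) (Phi h) (Phi k)"
    using assms(5) unfolding germ_groupoids_isomorphic_def by blast
  obtain Psi where hm: "homeomorphic_maps (germ_top TX DX) (germ_top TY DY) Phi Psi"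
    using hom homeomorphic_map_maps by blast
  have homP: "homeomorphic_map (germ_top TY DY) (germ_top TX DX) Psi"
    using hm homeomorphic_maps_map by blast
  have inv1: "\<forall>g\<in>topspace (germ_top TX DX). Psi (Phi g) = g"
   and inv2: "\<forall>h\<in>topspace (germ_top TY DY). Phi (Psi h) = h"
    using hm unfolding homeomorphic_maps_def by blast+
  have PsiG: "Psi h \<in> topspace (germ_top TX DX)" if "h \<in> topspace (germ_top TY DY)" for h
    using hm that unfolding homeomorphic_maps_def continuous_map_def by blast
  have presP: "\<forall>g\<in>topspace (germ_top TY DY). \<forall>h\<in>topspace (germ_top TY DY). \<forall>k\<in>topspace (germ_top TY DY).
      germ_prod DY ga g h k \<longleftrightarrow> germ_prod DX th (Psi g) (Psi h) (Psi k)"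
  proof (intro ballI)
    fix g h k assume g: "g \<in> topspace (germ_top TY DY)" and h: "h \<in> topspace (germ_top TY DY)"
      and k: "k \<in> topspace (germ_top TY DY)"
    have "germ_prod DX th (Psi g) (Psi h) (Psi k) \<longleftrightarrow>
          germ_prod DY ga (Phi (Psi g)) (Phi (Psi h)) (Phi (Psi k))"
      using pres PsiG[OF g] PsiG[OF h] PsiG[OF k] by blast
    then show "germ_prod DY ga g h k \<longleftrightarrow> germ_prod DX th (Psi g) (Psi h) (Psi k)"
      using inv2 g h k by simp
  qed
  have A: "gpair TX DX th TY DY ga Phi"
    unfolding gpair_def gpair_axioms_def using pX pY hom pres uX by blast
  have B: "gpair TY DY ga TX DX th Psi"
    unfolding gpair_def gpair_axioms_def using pX pY homP presP uY by blast
  define phi where "phi = gpair.phi DX Phi"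
  define psi where "psi = gpair.phi DY Psi"
  have phi_eq: "phi x = gsrc (Phi (unitg DX x))" for x
    unfolding phi_def gpair.phi_def[OF A] ..
  have psi_eq: "psi y = gsrc (Psi (unitg DY y))" for y
    unfolding psi_def gpair.phi_def[OF B] ..
  have hmaps: "homeomorphic_maps TX TY phi psi"
    unfolding homeomorphic_maps_def
  proof (intro conjI ballI)
    show "continuous_map TX TY phi" unfolding phi_def by (rule gpair.phi_cont[OF A])
    show "continuous_map TY TX psi" unfolding psi_def by (rule gpair.phi_cont[OF B])
    fix x assume x: "x \<in> topspace TX"
    have "Phi (unitg DX x) = unitg DY (phi x)" unfolding phi_def by (rule gpair.Phi_unit(1)[OF A x])
    then have "Psi (unitg DY (phi x)) = unitg DX x"
      using inv1 pact.unitg_props(1)[OF pX x] by metis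
    then show "psi (phi x) = x" unfolding psi_eq using pact.unitg_props(2)[OF pX x] by simp
  next
    fix y assume y: "y \<in> topspace TY"
    have "Psi (unitg DY y) = unitg DX (psi y)" unfolding psi_def by (rule gpair.Phi_unit(1)[OF B y])
    then have "Phi (unitg DX (psi y)) = unitg DY y"
      using inv2 pact.unitg_props(1)[OF pY y] by metis
    then show "phi (psi y) = y" unfolding phi_eq using pact.unitg_props(2)[OF pY y] by simp
  qed
  obtain a :: "'s \<Rightarrow> 'x \<Rightarrow> 't" where a:
    "continuous_map (star_space TX DX) (discrete_topology UNIV) (\<lambda>(s, x). a s x)"
    "\<forall>s x. x \<in> DX (star s) \<longrightarrow> phi x \<in> DY (star (a s x)) \<and> phi (th s x) = ga (a s x) (phi x)"
    using gpair.a_exists[OF A] unfolding phi_def by blast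
  obtain b :: "'t \<Rightarrow> 'y \<Rightarrow> 's" where b:
    "continuous_map (star_space TY DY) (discrete_topology UNIV) (\<lambda>(t, y). b t y)"
    "\<forall>t y. y \<in> DY (star t) \<longrightarrow> psi y \<in> DX (star (b t y)) \<and> psi (ga t y) = th (b t y) (psi y)"
    using gpair.a_exists[OF B] unfolding psi_def by blast
  show ?thesis unfolding cont_orbit_equiv_def
    using hmaps a b by blast
qed

end
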